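(* Let $n,m,k\in\mathbb{N}$, $p\in\mathbb{N}\cup\{0\}$, and let $F:V(T_n)\to V(D_m)$ satisfy $2^{p}d_{T_n}(u,v)\le d_{D_m}(F(u),F(v))\le 2^k\cdot 2^{p}d_{T_n}(u,v)$ for all $u,v\in V(T_n)$. Let $s$ be a vertex of $T_n$, and let $M$ be a subdiamond of $D_m$ such that $F$ maps $s$ and all descendants of $s$ lying in generations $1,2,\dots,2^k+2$ relative to $s$ into $M$. Let $s_1,s_2,s_3,s_4$ be the four grandchildren of $s$, and for $i=1,\dots,4$ let $S_i$ be the set of those descendants of $s_i$ which lie in generations $\ge 2^k+3$ relative to $s$. Then for at most two indices $i\in\{1,2,3,4\}$ the set $S_i$ contains a vertex $x$ with $F(x)\notin M$.
   Context: $T_n$: vertices are finite $0$-$1$ sequences of length at most $n$; two vertices are adjacent if one sequence is obtained from the other by adding one term on the right; metric is the shortest path metric. A descendant of $s$ is a sequence extending $s$; it lies in generation $j$ relative to $s$ if it is $j$ terms longer than $s$ ($s$ itself is generation $0$); grandchildren are the descendants in generation $2$. Diamonds: $D_0$ is an edge; $D_i$ is obtained from $D_{i-1}$ by replacing each edge $uv$ by a quadrilateral $u,a,v,b$; $D_m$ has the shortest path metric with unit edges. A subdiamond of $D_m$ is the set of vertices that evolved from a single edge $e$ of some $D_j$ ($0\le j\le m$), including the endpoints of $e$ (its top and bottom). *)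

theory Defs
  imports Main
begin

definition graph_dist :: "('a \<times> 'a) set \<Rightarrow> 'a \<Rightarrow> 'a \<Rightarrow> nat" where
  "graph_dist E u v = (LEAST k. (u, v) \<in> E ^^ k)"

definition tree_verts :: "nat \<Rightarrow> bool list set" where
  "tree_verts n = {s. length s \<le> n}"

definition tree_adj :: "nat \<Rightarrow> (bool list \<times> bool list) set" where
  "tree_adj n = {(s, t). s \<in> tree_verts n \<and> t \<in> tree_verts n \<and>
                   ((\<exists>b. t = s @ [b]) \<or> (\<exists>b. s = t @ [b]))}"

definition dT :: "nat \<Rightarrow> bool list \<Rightarrow> bool list \<Rightarrow> nat" where
  "dT n = graph_dist (tree_adj n)"

text \<open>Vertices: the bottom and top of D_0, and the new vertex Mid u v c created
  when the edge with bottom u and top v is replaced by the quadrilateral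
  u, Mid u v False, v, Mid u v True.\<close>

datatype dv = Bot | Top | Mid dv dv bool

text \<open>Edges are stored as (bottom, top) pairs.\<close>

definition children :: "dv \<times> dv \<Rightarrow> (dv \<times> dv) set" where
  "children e = (case e of (u, v) \<Rightarrow>
       {(u, Mid u v c) | c. True} \<union> {(Mid u v c, v) | c. True})"

text \<open>Edges of D_{j+i} that evolved from the edge e of D_j.\<close>

fun desc_edges :: "dv \<times> dv \<Rightarrow> nat \<Rightarrow> (dv \<times> dv) set" where
  "desc_edges e 0 = {e}"
| "desc_edges e (Suc i) = (\<Union>e' \<in> desc_edges e i. children e')"

definition diamond_edges :: "nat \<Rightarrow> (dv \<times> dv) set" where
  "diamond_edges m = desc_edges (Bot, Top) m"

definition edge_verts :: "(dv \<times> dv) set \<Rightarrow> dv set" where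
  "edge_verts E = fst ` E \<union> snd ` E"

definition diamond_verts :: "nat \<Rightarrow> dv set" where
  "diamond_verts m = edge_verts (diamond_edges m)"

definition diamond_adj :: "nat \<Rightarrow> (dv \<times> dv) set" where
  "diamond_adj m = diamond_edges m \<union> (diamond_edges m)\<inverse>"

definition dD :: "nat \<Rightarrow> dv \<Rightarrow> dv \<Rightarrow> nat" where
  "dD m = graph_dist (diamond_adj m)"

definition subdiamond :: "nat \<Rightarrow> dv set \<Rightarrow> bool" where
  "subdiamond m M \<longleftrightarrow>
     (\<exists>j\<le>m. \<exists>e \<in> diamond_edges j. M = edge_verts (desc_edges e (m - j)))"

end

theory Submission
  imports Defs
begin

fun lev :: "dv \<Rightarrow> nat" where
  "lev Bot = 0" | "lev Top = 0" | "lev (Mid u v c) = Suc (max (lev u) (lev v))"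

definition levE :: "dv \<times> dv \<Rightarrow> nat" where
  "levE e = max (lev (fst e)) (lev (snd e))"

definition par :: "dv \<times> dv \<Rightarrow> dv \<times> dv" where
  "par e = (if lev (fst e) < lev (snd e)
     then (case snd e of Mid a b c \<Rightarrow> (a, b) | _ \<Rightarrow> e)
     else (case fst e of Mid a b c \<Rightarrow> (a, b) | _ \<Rightarrow> e))"

lemma children_cases:
  assumes "e1 \<in> children e"
  obtains c where "e1 = (fst e, Mid (fst e) (snd e) c)" | c where "e1 = (Mid (fst e) (snd e) c, snd e)"
  using assms by (cases e) (auto simp: children_def)

lemma par_child: "e1 \<in> children e \<Longrightarrow> par e1 = e"
  by (erule children_cases) (auto simp: par_def)

lemma levE_child: "e1 \<in> children e \<Longrightarrow> levE e1 = Suc (levE e)"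
  by (erule children_cases) (auto simp: levE_def)

lemma desc_add: "desc_edges e (a + b) = (\<Union>e'\<in>desc_edges e a. desc_edges e' b)"
  by (induction b) auto

lemma desc_Suc': "desc_edges e (Suc i) = (\<Union>e'\<in>children e. desc_edges e' i)"
proof -
  have "desc_edges e (Suc i) = desc_edges e (1 + i)" by simp
  also have "\<dots> = (\<Union>e'\<in>children e. desc_edges e' i)" unfolding desc_add by simp
  finally show ?thesis .
qed

lemma par_desc: "e' \<in> desc_edges e i \<Longrightarrow> (par ^^ i) e' = e"
proof (induction i arbitrary: e')
  case (Suc i)
  then obtain e1 where "e1 \<in> desc_edges e i" "e' \<in> children e1" by auto
  have "(par ^^ Suc i) e' = (par ^^ i) (par e')" by (simp only: funpow_Suc_right comp_def)
  then show ?case using Suc.IH \<open>e1 \<in> desc_edges e i\<close> par_child[OF \<open>e' \<in> children e1\<close>] by simp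
qed simp

lemma levE_desc: "e' \<in> desc_edges e i \<Longrightarrow> levE e' = levE e + i"
proof (induction i arbitrary: e')
  case (Suc i)
  then obtain e1 where "e1 \<in> desc_edges e i" "e' \<in> children e1" by auto
  then show ?case using Suc.IH by (simp add: levE_child)
qed simp

lemma verts_desc:
  "x \<in> edge_verts (desc_edges e i) \<Longrightarrow> x = fst e \<or> x = snd e \<or>
     (\<exists>a b c i'. x = Mid a b c \<and> i' < i \<and> (a, b) \<in> desc_edges e i')"
proof (induction i arbitrary: x)
  case 0
  then show ?case by (auto simp: edge_verts_def)
next
  case (Suc i)
  then obtain e1 e2 where e1: "e1 \<in> desc_edges e i" "e2 \<in> children e1" "x = fst e2 \<or> x = snd e2"
    by (auto simp: edge_verts_def)
  have v1: "fst e1 \<in> edge_verts (desc_edges e i)" "snd e1 \<in> edge_verts (desc_edges e i)"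
    using e1(1) by (auto simp: edge_verts_def)
  from e1(2) show ?case
  proof (cases rule: children_cases)
    case (1 c)
    then show ?thesis using e1 Suc.IH[OF v1(1)]
      by (cases e1) (auto intro!: exI[of _ i] less_SucI; metis less_SucI)+
  next
    case (2 c)
    then show ?thesis using e1 Suc.IH[OF v1(2)]
      by (cases e1) (auto intro!: exI[of _ i]; metis less_SucI)+
  qed
qed

lemma lev_le_levE: "lev (fst e) \<le> levE e" "lev (snd e) \<le> levE e"
  by (auto simp: levE_def)

lemma levE_diamond: "e \<in> diamond_edges j \<Longrightarrow> levE e = j"
  using levE_desc[of e "(Bot,Top)" j] by (simp add: diamond_edges_def levE_def)

lemma key:
  assumes e: "e \<in> diamond_edges j" and e2: "e2 \<in> diamond_edges j"
    and x1: "x \<in> edge_verts (desc_edges e i)" and x2: "x \<in> edge_verts (desc_edges e2 i)"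
    and xn: "x \<noteq> fst e" "x \<noteq> snd e"
  shows "e = e2"
proof -
  obtain a b c i1 where x: "x = Mid a b c" "(a, b) \<in> desc_edges e i1"
    using verts_desc[OF x1] xn by auto
  have lx: "lev x = j + i1 + 1"
    using x levE_desc[OF x(2)] levE_diamond[OF e] by (simp add: levE_def)
  have "lev (fst e2) \<le> j" "lev (snd e2) \<le> j" using lev_le_levE levE_diamond[OF e2] by metis+
  then have "x \<noteq> fst e2" "x \<noteq> snd e2" using lx by auto
  then obtain a' b' c' i2 where x': "x = Mid a' b' c'" "(a', b') \<in> desc_edges e2 i2"
    using verts_desc[OF x2] by auto
  have "lev x = j + i2 + 1"
    using x' levE_desc[OF x'(2)] levE_diamond[OF e2] by (simp add: levE_def)
  then have "i1 = i2" using lx by simp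
  moreover have "a = a'" "b = b'" using x x' by auto
  ultimately show ?thesis using par_desc[OF x(2)] par_desc[OF x'(2)] by simp
qed

lemma ends_desc: "\<exists>e1\<in>desc_edges e i. fst e1 = fst e" "\<exists>e2\<in>desc_edges e i. snd e2 = snd e"
proof -
  show "\<exists>e1\<in>desc_edges e i. fst e1 = fst e"
  proof (induction i)
    case (Suc i)
    then obtain e1 where e1: "e1\<in>desc_edges e i" "fst e1 = fst e" by auto
    have "(fst e1, Mid (fst e1) (snd e1) True) \<in> children e1" by (cases e1) (auto simp: children_def)
    then have m: "(fst e1, Mid (fst e1) (snd e1) True) \<in> desc_edges e (Suc i)" using e1(1) by auto
    show ?case by (rule bexI[OF _ m]) (simp add: e1(2))
  qed auto
  show "\<exists>e2\<in>desc_edges e i. snd e2 = snd e"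
  proof (induction i)
    case (Suc i)
    then obtain e1 where e1: "e1\<in>desc_edges e i" "snd e1 = snd e" by auto
    have "(Mid (fst e1) (snd e1) True, snd e1) \<in> children e1" by (cases e1) (auto simp: children_def)
    then have m: "(Mid (fst e1) (snd e1) True, snd e1) \<in> desc_edges e (Suc i)" using e1(1) by auto
    show ?case by (rule bexI[OF _ m]) (simp add: e1(2))
  qed auto
qed

lemma ends_verts: "fst e \<in> edge_verts (desc_edges e i)" "snd e \<in> edge_verts (desc_edges e i)"
  using ends_desc[of e i] unfolding edge_verts_def by (metis UnI1 image_eqI, metis UnI2 image_eqI)

lemma separation:
  assumes "subdiamond m M"
  obtains b t where "b \<in> M" "t \<in> M"
    "\<And>x y. (x, y) \<in> diamond_adj m \<Longrightarrow> x \<in> M \<Longrightarrow> y \<notin> M \<Longrightarrow> x = b \<or> x = t"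
proof -
  obtain j e where j: "j \<le> m" "e \<in> diamond_edges j" "M = edge_verts (desc_edges e (m - j))"
    using assms by (auto simp: subdiamond_def)
  have de: "diamond_edges m = (\<Union>e''\<in>diamond_edges j. desc_edges e'' (m - j))"
    using desc_add[of "(Bot,Top)" j "m - j"] j(1) by (simp add: diamond_edges_def)
  show ?thesis
  proof
    show "fst e \<in> M" "snd e \<in> M" using j ends_verts by auto
    fix x y assume xy: "(x, y) \<in> diamond_adj m" "x \<in> M" "y \<notin> M"
    show "x = fst e \<or> x = snd e"
    proof (rule ccontr)
      assume xn: "\<not> ?thesis"
      from xy(1) obtain e'' where e'': "e'' \<in> diamond_edges j"
        "(x, y) \<in> desc_edges e'' (m - j) \<or> (y, x) \<in> desc_edges e'' (m - j)"
        unfolding diamond_adj_def de by auto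
      have "x \<in> edge_verts (desc_edges e'' (m - j))" "y \<in> edge_verts (desc_edges e'' (m - j))"
        using e''(2) by (force simp: edge_verts_def)+
      then have "e = e''" "y \<in> edge_verts (desc_edges e'' (m - j))"
        using key[OF j(2) e''(1), of x "m - j"] xy(2) xn j(3) by auto
      then show False using xy(3) j(3) by simp
    qed
  qed
qed

definition symc :: "('a \<times> 'a) set \<Rightarrow> ('a \<times> 'a) set" where "symc E = E \<union> E\<inverse>"

lemma conn_desc: "x \<in> edge_verts (desc_edges e i) \<Longrightarrow> (fst e, x) \<in> (symc (desc_edges e i))\<^sup>*"
proof (induction i arbitrary: e x)
  case 0
  then show ?case by (cases e) (auto simp: edge_verts_def symc_def)
next
  case (Suc i)
  obtain u v where e: "e = (u, v)" by (cases e)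
  have mono: "\<And>e'. e' \<in> children e \<Longrightarrow> (symc (desc_edges e' i))\<^sup>* \<subseteq> (symc (desc_edges e (Suc i)))\<^sup>*"
  proof (rule rtrancl_mono)
    fix e' assume "e' \<in> children e"
    then have "desc_edges e' i \<subseteq> desc_edges e (Suc i)" by (subst desc_Suc') blast
    then show "symc (desc_edges e' i) \<subseteq> symc (desc_edges e (Suc i))" by (auto simp: symc_def)
  qed
  from Suc.prems obtain e' where e': "e' \<in> children e" "x \<in> edge_verts (desc_edges e' i)"
    unfolding edge_verts_def desc_Suc' by blast
  from e'(1) show ?case
  proof (cases rule: children_cases)
    case (1 c)
    then show ?thesis using Suc.IH[OF e'(2)] mono[OF e'(1)] by auto
  next
    case (2 c)
    let ?e1 = "(u, Mid u v c)"
    have c1: "?e1 \<in> children e" using e by (auto simp: children_def)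
    have "(u, Mid u v c) \<in> (symc (desc_edges e (Suc i)))\<^sup>*"
      using Suc.IH[of "Mid u v c" ?e1] ends_verts[of ?e1 i] mono[OF c1] by auto
    moreover have "(Mid u v c, x) \<in> (symc (desc_edges e (Suc i)))\<^sup>*"
      using Suc.IH[OF e'(2)] mono[OF e'(1)] 2 e by auto
    ultimately show ?thesis using e by auto
  qed
qed

lemma diamond_conn:
  assumes "x \<in> diamond_verts m" "y \<in> diamond_verts m"
  shows "(x, y) \<in> (diamond_adj m)\<^sup>*"
proof -
  have "(Bot, x) \<in> (diamond_adj m)\<^sup>*" "(Bot, y) \<in> (diamond_adj m)\<^sup>*"
    using conn_desc[of _ "(Bot,Top)" m] assms
    by (auto simp: diamond_verts_def diamond_edges_def diamond_adj_def symc_def)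
  moreover have "((diamond_adj m)\<^sup>*)\<inverse> = (diamond_adj m)\<^sup>*"
    by (simp add: diamond_adj_def rtrancl_converse[symmetric] converse_Un Un_commute)
  ultimately show ?thesis by (metis converseI rtrancl_trans)
qed


lemma gd_le: "(u, v) \<in> E ^^ k \<Longrightarrow> graph_dist E u v \<le> k"
  unfolding graph_dist_def by (rule Least_le)

lemma gd_path: "(u, v) \<in> E\<^sup>* \<Longrightarrow> (u, v) \<in> E ^^ graph_dist E u v"
  unfolding graph_dist_def rtrancl_power by (rule LeastI_ex)

lemma relpow_conv: fixes E :: "('a \<times> 'a) set" shows "(x, y) \<in> E ^^ d \<Longrightarrow> (y, x) \<in> (E\<inverse>) ^^ d"
proof (induction d arbitrary: y)
  case (Suc d)
  then obtain z where "(x, z) \<in> E ^^ d" "(z, y) \<in> E" by (auto elim: relpow_Suc_E)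
  then show ?case using Suc.IH by (meson converseI relpow_Suc_I2)
qed simp

lemma exit_path:
  assumes "(x, y) \<in> E ^^ d" "x \<in> M" "y \<notin> M"
    and W: "\<And>a b. (a, b) \<in> E \<Longrightarrow> a \<in> M \<Longrightarrow> b \<notin> M \<Longrightarrow> a \<in> W"
  shows "\<exists>w\<in>W. \<exists>d'\<le>d. (w, y) \<in> E ^^ d'"
  using assms(1,3)
proof (induction d arbitrary: y)
  case 0
  then show ?case using assms(2) by simp
next
  case (Suc d)
  then obtain z where z: "(x, z) \<in> E ^^ d" "(z, y) \<in> E" by (auto elim: relpow_Suc_E)
  show ?case
  proof (cases "z \<in> M")
    case True
    then have "z \<in> W" using W z(2) Suc.prems by blast
    moreover have "(z, y) \<in> E ^^ 1" using z(2) by simp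
    ultimately show ?thesis by (intro bexI[of _ z] exI[of _ 1]) auto
  next
    case False
    then obtain w d' where "w \<in> W" "d' \<le> d" "(w, z) \<in> E ^^ d'" using Suc.IH[OF z(1)] by blast
    then show ?thesis using z(2) by (intro bexI[of _ w] exI[of _ "Suc d'"]) auto
  qed
qed

lemma tree_len: "(u, v) \<in> (tree_adj n) ^^ d \<Longrightarrow> length u \<le> length v + d \<and> length v \<le> length u + d"
proof (induction d arbitrary: v)
  case (Suc d)
  then obtain z where z: "(u, z) \<in> tree_adj n ^^ d" "(z, v) \<in> tree_adj n" by (auto elim: relpow_Suc_E)
  have "length z = Suc (length v) \<or> length v = Suc (length z)" using z(2) by (auto simp: tree_adj_def)
  then show ?case using Suc.IH[OF z(1)] by auto
qed simp

lemma tree_split: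
  assumes "(u, v) \<in> (tree_adj n) ^^ d" "\<exists>t. u = w @ t" "\<not> (\<exists>t. v = w @ t)"
  shows "\<exists>d1 d2. d1 + d2 = d \<and> (u, butlast w) \<in> tree_adj n ^^ d1 \<and> (butlast w, v) \<in> tree_adj n ^^ d2"
  using assms
proof (induction d arbitrary: u)
  case 0
  then show ?case by auto
next
  case (Suc d)
  then obtain x where x: "(u, x) \<in> tree_adj n" "(x, v) \<in> tree_adj n ^^ d"
    using relpow_Suc_D2 by metis
  show ?case
  proof (cases "\<exists>t. x = w @ t")
    case True
    then obtain d1 d2 where dd: "d1 + d2 = d" "(x, butlast w) \<in> tree_adj n ^^ d1" "(butlast w, v) \<in> tree_adj n ^^ d2"
      using Suc.IH[OF x(2) _ Suc.prems(3)] by blast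
    have "(u, butlast w) \<in> tree_adj n ^^ Suc d1" using relpow_Suc_I2[OF x(1) dd(2)] .
    then show ?thesis using dd by (metis add_Suc)
  next
    case False
    from Suc.prems(2) obtain t where t: "u = w @ t" by blast
    from x(1) False t have "\<exists>c. u = x @ [c]" by (auto simp: tree_adj_def)
    then obtain c where c: "u = x @ [c]" by blast
    have "w = x @ [c]"
    proof -
      from t c have "w @ t = x @ [c]" by simp
      then show ?thesis using False
        by (cases t rule: rev_cases) auto
    qed
    then have "butlast w = x" by simp
    then show ?thesis using x by (intro exI[of _ 1] exI[of _ d]) auto
  qed
qed

lemma tree_root: "u \<in> tree_verts n \<Longrightarrow> ([], u) \<in> (tree_adj n)\<^sup>*"
proof (induction u rule: rev_induct)
  case (snoc c u)
  then have "u \<in> tree_verts n" "(u, u @ [c]) \<in> tree_adj n" by (auto simp: tree_verts_def tree_adj_def)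
  then show ?case using snoc.IH by (meson rtrancl.rtrancl_into_rtrancl)
qed simp

lemma tree_conn: "u \<in> tree_verts n \<Longrightarrow> v \<in> tree_verts n \<Longrightarrow> (u, v) \<in> (tree_adj n)\<^sup>*"
proof -
  assume a: "u \<in> tree_verts n" "v \<in> tree_verts n"
  have "(tree_adj n)\<inverse> = tree_adj n" by (auto simp: tree_adj_def)
  then have "(u, []) \<in> (tree_adj n)\<^sup>*" using tree_root[OF a(1)]
    by (metis converseI rtrancl_converse)
  then show ?thesis using tree_root[OF a(2)] by (meson rtrancl_trans)
qed


theorem lemmaL:
  fixes n m k p :: nat
    and F :: "bool list \<Rightarrow> dv"
    and s :: "bool list"
    and M :: "dv set"
  assumes "n \<ge> 1" and "m \<ge> 1" and "k \<ge> 1"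
    and F_into: "\<forall>u \<in> tree_verts n. F u \<in> diamond_verts m"
    and bilip: "\<forall>u \<in> tree_verts n. \<forall>v \<in> tree_verts n.
        2 ^ p * dT n u v \<le> dD m (F u) (F v) \<and>
        dD m (F u) (F v) \<le> 2 ^ k * 2 ^ p * dT n u v"
    and s_vert: "s \<in> tree_verts n"
    and M_sub: "subdiamond m M"
    and s_in: "F s \<in> M"
    and gens_in: "\<forall>r. 1 \<le> length r \<and> length r \<le> 2 ^ k + 2 \<and> s @ r \<in> tree_verts n
                      \<longrightarrow> F (s @ r) \<in> M"
  shows "card {(a::bool, b::bool).
           (\<exists>x \<in> {s @ [a, b] @ r | r. s @ [a, b] @ r \<in> tree_verts n \<and>
                                     2 + length r \<ge> 2 ^ k + 3}.
             F x \<notin> M)} \<le> 2"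
proof -
  define A where "A = {(a::bool, b::bool).
           (\<exists>x \<in> {s @ [a, b] @ r | r. s @ [a, b] @ r \<in> tree_verts n \<and>
                                     2 + length r \<ge> 2 ^ k + 3}.
             F x \<notin> M)}"
  let ?E = "diamond_adj m"
  let ?T = "tree_adj n"
  let ?K = "2 ^ k * 2 ^ p :: nat"
  obtain bb tt where btM: "bb \<in> M" "tt \<in> M"
    and sep: "\<And>x y. (x, y) \<in> ?E \<Longrightarrow> x \<in> M \<Longrightarrow> y \<notin> M \<Longrightarrow> x = bb \<or> x = tt"
    using separation[OF M_sub] by metis
  have symE: "?E\<inverse> = ?E" by (auto simp: diamond_adj_def)
  have esc: "\<exists>r' w d'. s @ [a, b] @ r' \<in> tree_verts n \<and> length r' \<ge> 2 ^ k + 1 \<and>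
      w \<in> {bb, tt} \<and> (w, F (s @ [a, b] @ r')) \<in> ?E ^^ d' \<and> d' \<le> ?K"
    if ab: "(a, b) \<in> A" for a b
  proof -
    from ab obtain r where r: "s @ [a, b] @ r \<in> tree_verts n" "2 ^ k + 1 \<le> length r"
      "F (s @ [a, b] @ r) \<notin> M" unfolding A_def by auto
    define P where "P l = (F (s @ [a, b] @ take l r) \<notin> M)" for l
    define l0 where "l0 = (LEAST l. P l)"
    have Pr: "P (length r)" using r(3) by (simp add: P_def)
    have l0le: "l0 \<le> length r" unfolding l0_def using Pr by (rule Least_le)
    have Pl0: "P l0" unfolding l0_def using Pr by (rule LeastI)
    have tv: "s @ [a, b] @ take l r \<in> tree_verts n" for l
      using r(1) by (auto simp: tree_verts_def)
    have notP: "\<not> P l" if "l \<le> 2 ^ k" for l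
    proof -
      have "F (s @ ([a, b] @ take l r)) \<in> M"
        using gens_in[rule_format, of "[a, b] @ take l r"] that r(2) tv[of l] by auto
      then show ?thesis by (simp add: P_def)
    qed
    have "l0 \<ge> 2 ^ k + 1" using Pl0 notP[of l0] by linarith
    then obtain l1 where l1: "l0 = Suc l1" "l1 < length r" using l0le
      by (metis Suc_le_D Suc_le_lessD add.commute plus_1_eq_Suc)
    have nP1: "\<not> P l1" using l1(1) unfolding l0_def by (metis lessI not_less_Least)
    define z where "z = s @ [a, b] @ take l1 r"
    define y where "y = s @ [a, b] @ take l0 r"
    have yz: "y = z @ [r ! l1]" unfolding y_def z_def l1(1) using l1(2)
      by (simp add: take_Suc_conv_app_nth)
    have zy: "(z, y) \<in> ?T" using tv[of l1] tv[of l0] yz unfolding tree_adj_def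
      by (simp add: z_def y_def)
    then have "dT n z y \<le> 1" unfolding dT_def by (intro gd_le) simp
    moreover have "dD m (F z) (F y) \<le> ?K * dT n z y"
      using bilip tv[of l1] tv[of l0] unfolding z_def y_def by blast
    ultimately have dDle: "dD m (F z) (F y) \<le> ?K"
      using order_trans mult_le_mono2 by fastforce
    have "(F z, F y) \<in> ?E\<^sup>*" using F_into tv unfolding z_def y_def by (intro diamond_conn) auto
    then have pz: "(F z, F y) \<in> ?E ^^ dD m (F z) (F y)" unfolding dD_def by (rule gd_path)
    have "F z \<in> M" "F y \<notin> M" using nP1 Pl0 unfolding P_def z_def y_def by auto
    then obtain w d' where "w \<in> {bb, tt}" "d' \<le> dD m (F z) (F y)" "(w, F y) \<in> ?E ^^ d'"
      using exit_path[OF pz, of M "{bb,tt}"] sep by blast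
    then show ?thesis using dDle tv[of l0] \<open>l0 \<ge> 2 ^ k + 1\<close> l0le unfolding y_def
      by (intro exI[of _ "take l0 r"] exI[of _ w] exI[of _ d']) auto
  qed
  then have "\<forall>q\<in>A. \<exists>X. s @ [fst q, snd q] @ fst X \<in> tree_verts n \<and> length (fst X) \<ge> 2 ^ k + 1 \<and>
      fst (snd X) \<in> {bb, tt} \<and> (fst (snd X), F (s @ [fst q, snd q] @ fst X)) \<in> ?E ^^ snd (snd X)
      \<and> snd (snd X) \<le> ?K" by fastforce
  then obtain G where G: "\<forall>q\<in>A. s @ [fst q, snd q] @ fst (G q) \<in> tree_verts n \<and> length (fst (G q)) \<ge> 2 ^ k + 1 \<and>
      fst (snd (G q)) \<in> {bb, tt} \<and> (fst (snd (G q)), F (s @ [fst q, snd q] @ fst (G q))) \<in> ?E ^^ snd (snd (G q))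
      \<and> snd (snd (G q)) \<le> ?K" using bchoice by (metis (no_types, lifting))
  have inj: "inj_on (\<lambda>q. fst (snd (G q))) A"
  proof (rule inj_onI, rule ccontr)
    fix q1 q2 assume q: "q1 \<in> A" "q2 \<in> A" "fst (snd (G q1)) = fst (snd (G q2))" "q1 \<noteq> q2"
    obtain a1 b1 r1 w d1 where g1: "q1 = (a1, b1)" "G q1 = (r1, w, d1)" by (metis prod.exhaust)
    obtain a2 b2 r2 d2 where g2: "q2 = (a2, b2)" "G q2 = (r2, w, d2)" using q(3) g1
      by (metis prod.exhaust fst_conv snd_conv)
    define y1 where "y1 = s @ [a1, b1] @ r1"
    define y2 where "y2 = s @ [a2, b2] @ r2"
    have G1: "y1 \<in> tree_verts n" "length r1 \<ge> 2 ^ k + 1" "(w, F y1) \<in> ?E ^^ d1" "d1 \<le> ?K"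
      using G q(1) g1 unfolding y1_def by auto
    have G2: "y2 \<in> tree_verts n" "length r2 \<ge> 2 ^ k + 1" "(w, F y2) \<in> ?E ^^ d2" "d2 \<le> ?K"
      using G q(2) g2 unfolding y2_def by auto
    have "(F y1, w) \<in> ?E ^^ d1" using relpow_conv[OF G1(3)] symE by simp
    then have "(F y1, F y2) \<in> ?E ^^ (d1 + d2)" using G2(3) by (auto simp: relpow_add)
    then have "dD m (F y1) (F y2) \<le> d1 + d2" unfolding dD_def by (rule gd_le)
    moreover have "2 ^ p * dT n y1 y2 \<le> dD m (F y1) (F y2)" using bilip G1(1) G2(1) by blast
    moreover have "d1 + d2 \<le> 2 ^ p * (2 * 2 ^ k)"
    proof -
      have "(2::nat) ^ p * (2 * 2 ^ k) = 2 ^ k * 2 ^ p + 2 ^ k * 2 ^ p" by (simp add: algebra_simps)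
      then show ?thesis using G1(4) G2(4) by linarith
    qed
    ultimately have "2 ^ p * dT n y1 y2 \<le> 2 ^ p * (2 * 2 ^ k)" by linarith
    then have dTle: "dT n y1 y2 \<le> 2 * 2 ^ k" by simp
    have "(y1, y2) \<in> ?T ^^ dT n y1 y2" unfolding dT_def by (rule gd_path, rule tree_conn[OF G1(1) G2(1)])
    moreover have "\<exists>t. y1 = (s @ [a1, b1]) @ t" unfolding y1_def by simp
    moreover have "\<not> (\<exists>t. y2 = (s @ [a1, b1]) @ t)"
    proof
      assume "\<exists>t. y2 = (s @ [a1, b1]) @ t"
      then have "a1 = a2" "b1 = b2" unfolding y2_def by auto
      then show False using q(4) g1 g2 by simp
    qed
    note ts = tree_split[OF calculation this]
    have bl: "butlast (s @ [a1, b1]) = s @ [a1]" by (simp add: butlast_append)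
    obtain e1 e2 where e: "e1 + e2 = dT n y1 y2" "(y1, s @ [a1]) \<in> ?T ^^ e1" "(s @ [a1], y2) \<in> ?T ^^ e2"
      using ts unfolding bl by blast
    have "length y1 \<le> length (s @ [a1]) + e1" "length y2 \<le> length (s @ [a1]) + e2"
      using tree_len[OF e(2)] tree_len[OF e(3)] by auto
    then have "dT n y1 y2 \<ge> 2 * 2 ^ k + 4" using e(1) G1(2) G2(2) unfolding y1_def y2_def by simp
    then show False using dTle by simp
  qed
  have "card A \<le> card {bb, tt}"
    by (rule card_inj_on_le[OF inj]) (use G in auto)
  also have "\<dots> \<le> 2" by (simp add: card_insert_if)
  finally show ?thesis unfolding A_def .
qed

end
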